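(* Let $F$ be a field of characteristic zero. Every derivation of the Lie algebra $W^*(1,0)$ can be written as a sum of an inner derivation and a scalar derivation.
   Context: $W^*(1,0)$ is the Lie algebra over $F$ with basis $\{e^{ax}x^i\partial: a\in\mathbb Z, i\in\mathbb N\}$ ($\mathbb N$ the nonnegative integers), viewed as vector fields $f\partial$ with $f$ in the $F$-algebra $F[e^{\pm x},x]$ (basis $e^{ax}x^i$, multiplication adding exponents, $\partial(e^{ax}x^i)=ae^{ax}x^i+ie^{ax}x^{i-1}$), with bracket $[f\partial,g\partial]=(f\partial(g)-g\partial(f))\partial$. A derivation of a Lie algebra $L$ is a linear map $D:L\to L$ with $D([l_1,l_2])=[D(l_1),l_2]+[l_1,D(l_2)]$. A derivation $D$ is a scalar derivation if for every basis element $l$ (here $l=e^{ax}x^i\partial$) one has $D(l)=f_l\,l$ for some scalar $f_l\in F$ depending on $l$. *)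

theory Defs
  imports "HOL-Library.Poly_Mapping" "HOL-Library.Product_Plus"
begin

text \<open>The algebra F[e^{\<pm>x},x]: the basis element e^{ax}x^i is the key (a,i);
  multiplication is the convolution product of Poly_Mapping (exponents add).
  An element f of W^*(1,0) is identified with the coefficient function f of f\<partial>.\<close>

type_synonym 'a Wstar = "(int \<times> nat) \<Rightarrow>\<^sub>0 'a"

definition Wbasis :: "int \<Rightarrow> nat \<Rightarrow> 'a::field Wstar" where
  "Wbasis a i = Poly_Mapping.single (a, i) 1"

definition Wsmult :: "'a::field \<Rightarrow> 'a Wstar \<Rightarrow> 'a Wstar" where
  "Wsmult c f = Poly_Mapping.map (\<lambda>x. c * x) f"

text \<open>The derivation d/dx: d(e^{ax}x^i) = a e^{ax}x^i + i e^{ax}x^{i-1}.\<close>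
definition Wderiv :: "'a::field Wstar \<Rightarrow> 'a Wstar" where
  "Wderiv f = (\<Sum>k\<in>Poly_Mapping.keys f. case k of (a, i) \<Rightarrow>
      Poly_Mapping.single (a, i) (of_int a * Poly_Mapping.lookup f (a, i))
    + Poly_Mapping.single (a, i - 1) (of_nat i * Poly_Mapping.lookup f (a, i)))"

text \<open>Lie bracket [f\<partial>, g\<partial>] = (f \<partial>(g) - g \<partial>(f))\<partial>.\<close>
definition Wbracket :: "'a::field Wstar \<Rightarrow> 'a Wstar \<Rightarrow> 'a Wstar" where
  "Wbracket f g = f * Wderiv g - g * Wderiv f"

definition is_derivation :: "('a::field Wstar \<Rightarrow> 'a Wstar) \<Rightarrow> bool" where
  "is_derivation D \<longleftrightarrow>
     (\<forall>u v. D (u + v) = D u + D v) \<and>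
     (\<forall>c u. D (Wsmult c u) = Wsmult c (D u)) \<and>
     (\<forall>u v. D (Wbracket u v) = Wbracket (D u) v + Wbracket u (D v))"

definition is_inner_derivation :: "('a::field Wstar \<Rightarrow> 'a Wstar) \<Rightarrow> bool" where
  "is_inner_derivation D \<longleftrightarrow> (\<exists>u. D = Wbracket u)"

definition is_scalar_derivation :: "('a::field Wstar \<Rightarrow> 'a Wstar) \<Rightarrow> bool" where
  "is_scalar_derivation D \<longleftrightarrow> is_derivation D \<and>
     (\<forall>a i. \<exists>c. D (Wbasis a i) = Wsmult c (Wbasis a i))"

end

theory Submission
  imports Defs
begin

lemma lookup_Wsmult [simp]: "Poly_Mapping.lookup (Wsmult c f) k = c * Poly_Mapping.lookup f k"
  by (simp add: Wsmult_def map.rep_eq when_def)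

lemma Wsmult_conv: "Wsmult c f = Poly_Mapping.single 0 c * f"
  by (simp add: Wsmult_def mult_map_scale_conv_mult)

lemma lookup_Wbasis: "Poly_Mapping.lookup (Wbasis a i) k = (if k = (a,i) then 1 else 0)"
  by (auto simp: Wbasis_def lookup_single when_def)

lemma Wsmult_add [simp]: "Wsmult c (f + g) = Wsmult c f + Wsmult c g"
  by (rule poly_mapping_eqI) (simp add: lookup_add algebra_simps)
lemma Wsmult_add2: "Wsmult (c + d) f = Wsmult c f + Wsmult d f"
  by (rule poly_mapping_eqI) (simp add: lookup_add algebra_simps)
lemma Wsmult_diff [simp]: "Wsmult c (f - g) = Wsmult c f - Wsmult c g"
  by (rule poly_mapping_eqI) (simp add: lookup_minus algebra_simps)
lemma Wsmult_neg [simp]: "Wsmult c (- g) = - Wsmult c g"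
  by (rule poly_mapping_eqI) (simp)
lemma Wsmult_0 [simp]: "Wsmult 0 f = 0" "Wsmult c 0 = 0"
  by (rule poly_mapping_eqI, simp)+
lemma Wsmult_1 [simp]: "Wsmult 1 f = f"
  by (rule poly_mapping_eqI, simp)
lemma Wsmult_Wsmult [simp]: "Wsmult c (Wsmult d f) = Wsmult (c*d) f"
  by (rule poly_mapping_eqI, simp)
lemma Wsmult_mult1 [simp]: "Wsmult c f * g = Wsmult c (f * g)"
  by (simp add: Wsmult_conv mult.assoc)
lemma Wsmult_mult2 [simp]: "f * Wsmult c g = Wsmult c (f * g)"
  by (simp add: Wsmult_conv mult.left_commute)

lemma Wbasis_mult [simp]: "Wbasis a i * Wbasis b j = Wbasis (a+b) (i+j)"
  by (simp add: Wbasis_def mult_single)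

lemma single_Wbasis: "Poly_Mapping.single (a,i) c = Wsmult c (Wbasis a i)"
  by (rule poly_mapping_eqI) (simp add: lookup_Wbasis lookup_single when_def)

lemma Wexpand: "f = (\<Sum>k\<in>Poly_Mapping.keys f. Poly_Mapping.single k (Poly_Mapping.lookup f k))"
proof (rule poly_mapping_eqI)
  fix x
  have "(\<Sum>k\<in>Poly_Mapping.keys f. Poly_Mapping.lookup (Poly_Mapping.single k (Poly_Mapping.lookup f k)) x)
     = (\<Sum>k\<in>Poly_Mapping.keys f. if k = x then Poly_Mapping.lookup f x else 0)"
    by (rule sum.cong) (auto simp: lookup_single when_def)
  also have "\<dots> = Poly_Mapping.lookup f x"
    by (auto simp: in_keys_iff)
  finally show "Poly_Mapping.lookup f x = Poly_Mapping.lookup (\<Sum>k\<in>Poly_Mapping.keys f. Poly_Mapping.single k (Poly_Mapping.lookup f k)) x"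
    by (simp add: lookup_sum)
qed

lemma Wind [case_names zero step]:
  assumes "P 0" and "\<And>f a i c. P f \<Longrightarrow> P (f + Wsmult c (Wbasis a i))"
  shows "P f"
proof -
  have "P (\<Sum>k\<in>K. Poly_Mapping.single k (Poly_Mapping.lookup f k))" if "finite K" for K
    using that
  proof (induction K rule: finite_induct)
    case empty then show ?case using assms(1) by simp
  next
    case (insert k K)
    then show ?case using assms(2)[of "\<Sum>k\<in>K. Poly_Mapping.single k (Poly_Mapping.lookup f k)"]
      by (cases k) (simp add: single_Wbasis add.commute[of "Wsmult _ _"])
  qed
  then show ?thesis by (subst Wexpand) simp
qed


lemma diff_Suc_eq: "j - Suc 0 = (j::nat) \<Longrightarrow> j = 0" by arith

lemma sum_keys_delta:
  fixes f :: "'a::field Wstar"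
  shows "(\<Sum>k\<in>Poly_Mapping.keys f. if k = k0 then c * Poly_Mapping.lookup f k else 0) = c * Poly_Mapping.lookup f k0"
  by (simp add: sum.delta in_keys_iff)

lemma lookup_Wderiv:
  fixes f :: "'a::field Wstar"
  shows "Poly_Mapping.lookup (Wderiv f) (b, j) =
     of_int b * Poly_Mapping.lookup f (b, j) + of_nat (Suc j) * Poly_Mapping.lookup f (b, Suc j)"
proof -
  have "Poly_Mapping.lookup (Wderiv f) (b, j) =
    (\<Sum>k\<in>Poly_Mapping.keys f. (if k = (b,j) then of_int b * Poly_Mapping.lookup f k else 0)
       + (if k = (b, Suc j) then of_nat (Suc j) * Poly_Mapping.lookup f k else 0))"
    unfolding Wderiv_def lookup_sum
    by (rule sum.cong) (auto simp: lookup_add lookup_single when_def split: prod.splits dest: diff_Suc_eq)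
  also have "\<dots> = of_int b * Poly_Mapping.lookup f (b, j) + of_nat (Suc j) * Poly_Mapping.lookup f (b, Suc j)"
    by (simp only: sum.distrib sum_keys_delta)
  finally show ?thesis .
qed

lemma Wderiv_add [simp]: "Wderiv (f + g) = Wderiv f + Wderiv g"
  by (rule poly_mapping_eqI) (auto simp: lookup_Wderiv lookup_add algebra_simps)
lemma Wderiv_smult [simp]: "Wderiv (Wsmult c f) = Wsmult c (Wderiv f)"
  by (rule poly_mapping_eqI) (auto simp: lookup_Wderiv algebra_simps)
lemma Wderiv_zero [simp]: "Wderiv 0 = 0"
  by (rule poly_mapping_eqI) (auto simp: lookup_Wderiv)
lemma Wderiv_neg [simp]: "Wderiv (- f) = - Wderiv f"
  by (rule poly_mapping_eqI) (auto simp: lookup_Wderiv algebra_simps)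
lemma Wderiv_diff [simp]: "Wderiv (f - g) = Wderiv f - Wderiv g"
  by (rule poly_mapping_eqI) (auto simp: lookup_Wderiv lookup_minus algebra_simps)

lemma Wderiv_Wbasis:
  "Wderiv (Wbasis a i) = Wsmult (of_int a) (Wbasis a i) + Wsmult (of_nat i) (Wbasis a (i - 1))"
  by (rule poly_mapping_eqI) (cases i; auto simp: lookup_Wderiv lookup_add lookup_Wbasis split: if_splits)


lemma Wsmult_nat_pred: "Wsmult (of_nat j) (Wbasis c (i + (j - 1))) = Wsmult (of_nat j) (Wbasis c (i + j - 1))"
  by (cases j) auto

lemma Wderiv_mult_basis:
  "Wderiv (Wbasis a i * Wbasis b j :: 'a::field Wstar) = Wbasis a i * Wderiv (Wbasis b j) + Wderiv (Wbasis a i) * Wbasis b j"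
  by (rule poly_mapping_eqI) (cases i; cases j; auto simp: Wderiv_Wbasis lookup_add lookup_Wbasis algebra_simps)

lemma Wderiv_mult:
  "Wderiv (f * g :: 'a::field Wstar) = f * Wderiv g + Wderiv f * g"
proof (induction g rule: Wind)
  case zero then show ?case by simp
next
  case (step g b j d)
  have "Wderiv (f * Wbasis b j) = f * Wderiv (Wbasis b j) + Wderiv f * Wbasis b j"
  proof (induction f rule: Wind)
    case zero then show ?case by simp
  next
    case (step f a i c)
    have "Wderiv (Wbasis a i * Wbasis b j :: 'a Wstar) = Wbasis a i * Wderiv (Wbasis b j) + Wderiv (Wbasis a i) * Wbasis b j"
      by (rule Wderiv_mult_basis)
    then show ?case using step
      by (simp add: distrib_left distrib_right del: Wbasis_mult)
  qed
  then show ?case using step by (simp add: algebra_simps)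
qed

lemma Wbracket_add1 [simp]: "Wbracket (u + v) w = Wbracket u w + Wbracket v w"
  by (simp add: Wbracket_def algebra_simps)
lemma Wbracket_add2 [simp]: "Wbracket w (u + v) = Wbracket w u + Wbracket w v"
  by (simp add: Wbracket_def algebra_simps)
lemma Wbracket_diff1 [simp]: "Wbracket (u - v) w = Wbracket u w - Wbracket v w"
  by (simp add: Wbracket_def algebra_simps)
lemma Wbracket_diff2 [simp]: "Wbracket w (u - v) = Wbracket w u - Wbracket w v"
  by (simp add: Wbracket_def algebra_simps)
lemma Wbracket_smult1 [simp]: "Wbracket (Wsmult c u) w = Wsmult c (Wbracket u w)"
  by (simp add: Wbracket_def algebra_simps)
lemma Wbracket_smult2 [simp]: "Wbracket w (Wsmult c u) = Wsmult c (Wbracket w u)"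
  by (simp add: Wbracket_def algebra_simps)
lemma Wbracket_zero [simp]: "Wbracket 0 w = 0" "Wbracket w 0 = 0"
  by (simp_all add: Wbracket_def)
lemma Wbracket_antisym: "Wbracket u w = - Wbracket w u"
  by (simp add: Wbracket_def)

lemma Wjacobi:
  "Wbracket u (Wbracket v w) = Wbracket (Wbracket u v) w + Wbracket v (Wbracket u (w :: 'a::field Wstar))"
  by (simp add: Wbracket_def Wderiv_mult algebra_simps)

lemma Wone_basis: "Wbasis 0 0 = 1"
  by (simp add: Wbasis_def zero_prod_def[symmetric])

lemma Wderiv_one [simp]: "Wderiv (1 :: 'a::field Wstar) = 0"
  using Wderiv_Wbasis[of 0 0] by (simp add: Wone_basis)

lemma Wbracket_one: "Wbracket 1 v = Wderiv v"
  by (simp add: Wbracket_def)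

lemma Wbracket_basis:
  "Wbracket (Wbasis a i) (Wbasis b j :: 'a::field Wstar) =
    Wsmult (of_int (b - a)) (Wbasis (a+b) (i+j)) + Wsmult (of_nat j - of_nat i) (Wbasis (a+b) (i+j-1))"
  by (rule poly_mapping_eqI) (cases i; cases j; auto simp: Wbracket_def Wderiv_Wbasis lookup_add lookup_minus lookup_Wbasis algebra_simps)


definition Wdeg :: "'a::field Wstar \<Rightarrow> 'a Wstar" where
  "Wdeg f = (\<Sum>k\<in>Poly_Mapping.keys f. Poly_Mapping.single k (of_int (fst k) * Poly_Mapping.lookup f k))"

lemma lookup_Wdeg: "Poly_Mapping.lookup (Wdeg f) k = of_int (fst k) * Poly_Mapping.lookup f k"
proof -
  have "Poly_Mapping.lookup (Wdeg f) k =
    (\<Sum>k'\<in>Poly_Mapping.keys f. if k' = k then of_int (fst k) * Poly_Mapping.lookup f k' else 0)"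
    unfolding Wdeg_def lookup_sum
    by (rule sum.cong) (auto simp: lookup_single when_def)
  also have "\<dots> = of_int (fst k) * Poly_Mapping.lookup f k"
    by (rule sum_keys_delta)
  finally show ?thesis .
qed

lemma Wdeg_add [simp]: "Wdeg (f + g) = Wdeg f + Wdeg g"
  by (rule poly_mapping_eqI) (auto simp: lookup_Wdeg lookup_add algebra_simps)
lemma Wdeg_smult [simp]: "Wdeg (Wsmult c f) = Wsmult c (Wdeg f)"
  by (rule poly_mapping_eqI) (auto simp: lookup_Wdeg algebra_simps)
lemma Wdeg_zero [simp]: "Wdeg 0 = 0"
  by (rule poly_mapping_eqI) (auto simp: lookup_Wdeg)
lemma Wdeg_diff [simp]: "Wdeg (f - g) = Wdeg f - Wdeg g"
  by (rule poly_mapping_eqI) (auto simp: lookup_Wdeg lookup_minus algebra_simps)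
lemma Wdeg_Wbasis: "Wdeg (Wbasis a i) = Wsmult (of_int a) (Wbasis a i)"
  by (rule poly_mapping_eqI) (auto simp: lookup_Wdeg lookup_Wbasis)
lemma Wdeg_Wderiv: "Wdeg (Wderiv f) = Wderiv (Wdeg f)"
  by (rule poly_mapping_eqI) (auto simp: lookup_Wdeg lookup_Wderiv algebra_simps)

lemma Wdeg_mult:
  "Wdeg (f * g :: 'a::field Wstar) = f * Wdeg g + Wdeg f * g"
proof (induction g rule: Wind)
  case zero then show ?case by simp
next
  case (step g b j d)
  have "Wdeg (f * Wbasis b j) = f * Wdeg (Wbasis b j) + Wdeg f * Wbasis b j"
  proof (induction f rule: Wind)
    case zero then show ?case by simp
  next
    case (step f a i c)
    have "Wdeg (Wbasis a i * Wbasis b j :: 'a Wstar) = Wbasis a i * Wdeg (Wbasis b j) + Wdeg (Wbasis a i) * Wbasis b j"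
      by (simp add: Wdeg_Wbasis Wsmult_add2[symmetric] add.commute)
    then show ?case using step
      by (simp add: distrib_left distrib_right del: Wbasis_mult)
  qed
  then show ?case using step by (simp add: algebra_simps)
qed

lemma Wdeg_bracket: "Wdeg (Wbracket u v) = Wbracket (Wdeg u) v + Wbracket u (Wdeg v)"
  by (simp add: Wbracket_def Wdeg_mult Wdeg_Wderiv algebra_simps)

lemma der_lin:
  assumes "is_derivation D"
  shows "D 0 = 0" "D (u + v) = D u + D v" "D (Wsmult c u) = Wsmult c (D u)"
    "D (u - v) = D u - D v" "D (Wbracket u v) = Wbracket (D u) v + Wbracket u (D v)"
proof -
  show a: "D (u + v) = D u + D v" "D (Wsmult c u) = Wsmult c (D u)"
       "D (Wbracket u v) = Wbracket (D u) v + Wbracket u (D v)"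
    using assms by (auto simp: is_derivation_def)
  have add: "\<And>x y. D (x + y) = D x + D y" using assms by (auto simp: is_derivation_def)
  have "D (0 + 0) = D 0 + D 0" by (rule add)
  then show z: "D 0 = 0" by simp
  have "D (v + - v) = D v + D (- v)" by (rule add)
  then have "D (- v) = - D v" using z by (simp add: eq_neg_iff_add_eq_0 add.commute)
  then show "D (u - v) = D u - D v" using add[of u "- v"] by simp
qed


lemma der_Wdeg: "is_derivation Wdeg"
  unfolding is_derivation_def
  by (intro conjI allI Wdeg_add Wdeg_smult Wdeg_bracket)

lemma der_ad: "is_derivation (Wbracket (u :: 'a::field Wstar))"
  unfolding is_derivation_def
  by (intro conjI allI Wbracket_add2 Wbracket_smult2 Wjacobi)

lemma der_diff:
  assumes "is_derivation D1" "is_derivation D2"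
  shows "is_derivation (\<lambda>v. D1 v - D2 v)"
  unfolding is_derivation_def
proof (intro conjI allI)
  fix u v c
  show "D1 (u + v) - D2 (u + v) = D1 u - D2 u + (D1 v - D2 v)"
    by (simp add: der_lin[OF assms(1)] der_lin[OF assms(2)])
  show "D1 (Wsmult c u) - D2 (Wsmult c u) = Wsmult c (D1 u - D2 u)"
    by (simp add: der_lin[OF assms(1)] der_lin[OF assms(2)])
  show "D1 (Wbracket u v) - D2 (Wbracket u v) = Wbracket (D1 u - D2 u) v + Wbracket u (D1 v - D2 v)"
    by (simp add: der_lin[OF assms(1)] der_lin[OF assms(2)])
qed

lemma der_scale:
  assumes "is_derivation D1"
  shows "is_derivation (\<lambda>v. Wsmult c (D1 v))"
  unfolding is_derivation_def
proof (intro conjI allI)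
  fix u v d
  show "Wsmult c (D1 (u + v)) = Wsmult c (D1 u) + Wsmult c (D1 v)"
    by (simp add: der_lin[OF assms(1)])
  show "Wsmult c (D1 (Wsmult d u)) = Wsmult d (Wsmult c (D1 u))"
    by (simp add: der_lin[OF assms(1)] mult.commute)
  show "Wsmult c (D1 (Wbracket u v)) = Wbracket (Wsmult c (D1 u)) v + Wbracket u (Wsmult c (D1 v))"
    by (simp add: der_lin[OF assms(1)])
qed


lemma Wsmult_diff2: "Wsmult (c - d) f = Wsmult c f - Wsmult d f"
  by (rule poly_mapping_eqI) (simp add: lookup_minus algebra_simps)

lemma one_plus_of_nat_ne [simp]: "(1 + of_nat n :: 'a::field_char_0) \<noteq> 0"
  by (metis of_nat_Suc of_nat_neq_0)

lemma Wkernel: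
  fixes w :: "'a::field_char_0 Wstar"
  assumes h: "Wderiv w = Wsmult (of_int a) w"
  shows "w = Wsmult (Poly_Mapping.lookup w (a, 0)) (Wbasis a 0)"
proof -
  let ?f = "Poly_Mapping.lookup w"
  have rel: "of_int b * ?f (b, j) + of_nat (Suc j) * ?f (b, Suc j) = of_int a * ?f (b, j)" for b j
    using arg_cong[OF h, of "\<lambda>p. Poly_Mapping.lookup p (b, j)"] by (simp add: lookup_Wderiv)
  have z1: "?f (b, j) = 0" if "b \<noteq> a" for b j
  proof (rule ccontr)
    assume nz: "?f (b, j) \<noteq> 0"
    have all: "?f (b, j + n) \<noteq> 0" for n
    proof (induction n)
      case 0 then show ?case using nz by simp
    next
      case (Suc n)
      have "of_nat (Suc (j + n)) * ?f (b, Suc (j + n)) = (of_int a - of_int b) * ?f (b, j + n)"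
        using rel[of b "j + n"] by (simp add: algebra_simps)
      moreover have "(of_int a - of_int b :: 'a) \<noteq> 0" using that by simp
      ultimately show ?case using Suc by auto
    qed
    have "(\<lambda>n. (b, j + n)) ` UNIV \<subseteq> Poly_Mapping.keys w"
      using all by (auto simp: in_keys_iff)
    moreover have "infinite ((\<lambda>n. (b, j + n)) ` (UNIV :: nat set))"
    proof
      assume "finite ((\<lambda>n. (b, j + n)) ` (UNIV :: nat set))"
      then have "finite (UNIV :: nat set)" by (rule finite_imageD) (auto simp: inj_on_def)
      then show False by simp
    qed
    ultimately show False using finite_subset[OF _ finite_keys] by blast
  qed
  have z2: "?f (a, Suc j) = 0" for j
    using rel[of a j] by simp
  show ?thesis
  proof (rule poly_mapping_eqI)
    fix k :: "int \<times> nat"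
    obtain b j where k: "k = (b, j)" by (cases k)
    show "?f k = Poly_Mapping.lookup (Wsmult (?f (a, 0)) (Wbasis a 0)) k"
      using z1 z2 unfolding k by (cases j; cases "b = a") (auto simp: lookup_Wbasis)
  qed
qed

lemma Wsurj_basis:
  "\<exists>p. Wderiv p = (Wbasis a i :: 'a::field_char_0 Wstar)"
proof (cases "a = 0")
  case True
  have ne: "(1 + of_nat i :: 'a) \<noteq> 0" by (metis of_nat_Suc of_nat_neq_0)
  have "Wderiv (Wsmult (1 / of_nat (Suc i)) (Wbasis a (Suc i)) :: 'a Wstar) = Wbasis a i"
    using True ne by (simp add: Wderiv_Wbasis)
  then show ?thesis by blast
next
  case False
  show ?thesis
  proof (induction i)
    case 0
    have "Wderiv (Wsmult (1 / of_int a) (Wbasis a 0) :: 'a Wstar) = Wbasis a 0"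
      using False by (simp add: Wderiv_Wbasis)
    then show ?case by blast
  next
    case (Suc i)
    then obtain p where p: "Wderiv p = (Wbasis a i :: 'a Wstar)" by blast
    have "Wderiv (Wsmult (1 / of_int a) (Wbasis a (Suc i) - Wsmult (of_nat (Suc i)) p) :: 'a Wstar) = Wbasis a (Suc i)"
      using False by (simp add: Wderiv_Wbasis p)
    then show ?case by blast
  qed
qed

lemma Wsurj: "\<exists>p. Wderiv p = (w :: 'a::field_char_0 Wstar)"
proof (induction w rule: Wind)
  case zero then show ?case by (intro exI[of _ 0]) simp
next
  case (step f a i c)
  then obtain p where p: "Wderiv p = f" by blast
  obtain q where q: "Wderiv q = (Wbasis a i :: 'a Wstar)" using Wsurj_basis by blast
  have "Wderiv (p + Wsmult c q) = f + Wsmult c (Wbasis a i)" by (simp add: p q)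
  then show ?case by blast
qed


lemma gen_zero:
  fixes E :: "'a::field_char_0 Wstar \<Rightarrow> 'a Wstar"
  assumes der: "is_derivation E"
    and base: "\<And>a. a \<in> {-2,-1,0,1,2} \<Longrightarrow> E (Wbasis a 0) = 0"
    and bx: "E (Wbasis 0 1) = 0"
  shows "E v = 0"
proof -
  note L = der_lin[OF der]
  have cancel: "E x = 0" if "c \<noteq> 0" "E (Wsmult c x) = 0" for c x
  proof -
    have "Wsmult c (E x) = 0" using that L by simp
    then have "Wsmult (1 / c) (Wsmult c (E x)) = 0" by simp
    then show ?thesis using that by simp
  qed
  have br: "E (Wbracket x y) = 0" if "E x = 0" "E y = 0" for x y
    using that L by simp
  have pos: "E (Wbasis (2 + int n) 0) = 0" for n
  proof (induction n)
    case 0 then show ?case using base by simp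
  next
    case (Suc n)
    have "E (Wbracket (Wbasis 1 0) (Wbasis (2 + int n) 0)) = 0"
      by (rule br) (use base Suc in simp_all)
    then have "E (Wsmult (of_int (1 + int n)) (Wbasis (2 + int (Suc n)) 0)) = 0"
      by (simp add: Wbracket_basis add_ac)
    then show ?case by (rule cancel[rotated]) (simp add: add_ac)
  qed
  have neg: "E (Wbasis (- 2 - int n) 0) = 0" for n
  proof (induction n)
    case 0 then show ?case using base by simp
  next
    case (Suc n)
    have "E (Wbracket (Wbasis (-1) 0) (Wbasis (- 2 - int n) 0)) = 0"
      by (rule br) (use base Suc in simp_all)
    then have "E (Wsmult (of_int (- 1 - int n)) (Wbasis (- 3 - int n) 0)) = 0"
      by (simp add: Wbracket_basis)
    moreover have "- 2 - int (Suc n) = - 3 - int n" by simp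
    moreover have ne: "(of_int (- 1 - int n) :: 'a) \<noteq> 0"
      by (simp only: of_int_eq_0_iff)
    ultimately show ?case using cancel[OF ne] by simp
  qed
  have all0: "E (Wbasis a 0) = 0" for a
  proof -
    consider "a \<in> {-2,-1,0,1,2}" | "a > 2" | "a < -2" by force
    then show ?thesis
    proof cases
      case 1 then show ?thesis by (rule base)
    next
      case 2
      then have "a = 2 + int (nat (a - 2))" by simp
      then show ?thesis using pos by metis
    next
      case 3
      then have "a = - 2 - int (nat (- a - 2))" by simp
      then show ?thesis using neg by metis
    qed
  qed
  have nz: "E (Wbasis a j) = 0" if "a \<noteq> 0" for a j
  proof (induction j)
    case 0 then show ?case by (rule all0)
  next
    case (Suc j)
    have "E (Wbracket (Wbasis 0 1) (Wbasis a j)) = 0"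
      by (rule br) (use bx Suc in simp_all)
    then have "E (Wsmult (of_int a) (Wbasis a (Suc j)) + Wsmult (of_nat j - 1) (Wbasis a j)) = 0"
      by (simp add: Wbracket_basis)
    then have "E (Wsmult (of_int a) (Wbasis a (Suc j))) = 0"
      using Suc L by simp
    then show ?case by (rule cancel[rotated]) (use that in simp)
  qed
  have zj: "E (Wbasis 0 j) = 0" for j
  proof (induction j)
    case 0 then show ?case by (rule all0)
  next
    case (Suc j)
    have "E (Wbracket (Wbasis 1 0) (Wbasis (-1) (Suc j))) = 0"
      by (rule br) (use all0 nz in simp_all)
    then have "E (Wsmult (- 2) (Wbasis 0 (Suc j)) + Wsmult (of_nat (Suc j)) (Wbasis 0 j)) = 0"
      by (simp add: Wbracket_basis)
    then have "E (Wsmult (- 2) (Wbasis 0 (Suc j))) = 0"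
      using Suc L by simp
    then show ?case by (rule cancel[rotated]) simp
  qed
  have allb: "E (Wbasis a j) = 0" for a j
    using nz zj by (cases "a = 0") auto
  show ?thesis
  proof (induction v rule: Wind)
    case zero then show ?case using L by simp
  next
    case (step f a i c)
    then show ?case using L allb by simp
  qed
qed


lemma der_Wderiv: "is_derivation (Wderiv :: 'a::field Wstar \<Rightarrow> 'a Wstar)"
proof -
  have "Wderiv = Wbracket (1 :: 'a Wstar)" by (rule ext) (simp add: Wbracket_one)
  then show ?thesis using der_ad by metis
qed

theorem theorem2:
  fixes D :: "'a::field_char_0 Wstar \<Rightarrow> 'a Wstar"
  assumes "is_derivation D"
  shows "\<exists>I S. is_inner_derivation I \<and> is_scalar_derivation S \<and> D = (\<lambda>v. I v + S v)"
proof -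
  obtain u0 where u0: "Wderiv u0 = - D 1" using Wsurj by blast
  define E where "E v = D v - Wbracket u0 v" for v
  have derE: "is_derivation E"
    unfolding E_def by (rule der_diff[OF assms der_ad])
  note L = der_lin[OF derE]
  have E1: "E 1 = 0"
    by (simp add: E_def Wbracket_def u0)
  have Ecomm: "Wderiv (E v) = E (Wderiv v)" for v
    using L(5)[of 1 v] E1 by (simp add: Wbracket_one)
  define cc where "cc a = Poly_Mapping.lookup (E (Wbasis a 0)) (a, 0)" for a
  have Ea: "E (Wbasis a 0) = Wsmult (cc a) (Wbasis a 0)" for a
  proof -
    have "Wderiv (E (Wbasis a 0)) = Wsmult (of_int a) (E (Wbasis a 0))"
      by (simp add: Ecomm Wderiv_Wbasis L)
    then show ?thesis unfolding cc_def by (rule Wkernel)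
  qed
  define k where "k = Poly_Mapping.lookup (E (Wbasis 0 1)) (0, 0)"
  have Ex: "E (Wbasis 0 1) = Wsmult k (Wbasis 0 0)"
  proof -
    have "Wderiv (E (Wbasis 0 1)) = Wsmult (of_int 0) (E (Wbasis 0 1))"
      by (simp add: Ecomm Wderiv_Wbasis L Wone_basis E1)
    then show ?thesis unfolding k_def by (rule Wkernel)
  qed
  have cc0: "cc 0 = 0" unfolding cc_def by (simp add: Wone_basis E1)
  have ccadd: "cc (a + b) = cc a + cc b" if "a \<noteq> b" for a b
  proof -
    have "E (Wbracket (Wbasis a 0) (Wbasis b 0)) = Wbracket (E (Wbasis a 0)) (Wbasis b 0) + Wbracket (Wbasis a 0) (E (Wbasis b 0))"
      by (rule L(5))
    then have "Poly_Mapping.lookup (E (Wbracket (Wbasis a 0) (Wbasis b 0))) (a + b, 0) = Poly_Mapping.lookup (Wbracket (E (Wbasis a 0)) (Wbasis b 0) + Wbracket (Wbasis a 0) (E (Wbasis b 0))) (a + b, 0)"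
      by simp
    then have "of_int (b - a) * cc (a + b) = of_int (b - a) * (cc a + cc b)"
      by (simp add: Wbracket_basis Ea L lookup_add lookup_Wbasis algebra_simps)
    then show ?thesis using that by simp
  qed
  define c1 where "c1 = cc 1"
  have ccm1: "cc (-1) = - c1" using ccadd[of 1 "-1"] cc0 unfolding c1_def by (simp add: eq_neg_iff_add_eq_0 add.commute)
  have cc2: "cc 2 = 2 * c1" using ccadd[of 2 "-1"] ccm1 unfolding c1_def by simp
  have ccm2: "cc (-2) = - 2 * c1" using ccadd[of "-2" 1] ccm1 unfolding c1_def by (simp add: eq_neg_iff_add_eq_0 add.commute)
  have ccs: "cc a = of_int a * c1" if "a \<in> {-2,-1,0,1,2}" for a
    using that cc0 ccm1 cc2 ccm2 unfolding c1_def by auto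
  define E2 where "E2 v = E v - Wsmult c1 (Wdeg v) - Wsmult k (Wderiv v - Wdeg v)" for v
  have derE2: "is_derivation E2"
    unfolding E2_def
    by (intro der_diff der_scale derE der_Wdeg der_Wderiv)
  have E2z: "E2 v = 0" for v
  proof (rule gen_zero[OF derE2])
    fix a :: int assume "a \<in> {-2,-1,0,1,2}"
    then show "E2 (Wbasis a 0) = 0"
      by (simp add: E2_def Ea ccs Wdeg_Wbasis Wderiv_Wbasis mult.commute)
  next
    show "E2 (Wbasis 0 1) = 0"
      using Ex by (simp add: E2_def Wdeg_Wbasis Wderiv_Wbasis)
  qed
  define I where "I = Wbracket (u0 + Wsmult k 1)"
  define S where "S v = Wsmult (c1 - k) (Wdeg v)" for v
  have "is_inner_derivation I" unfolding I_def is_inner_derivation_def by blast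
  moreover have "is_scalar_derivation S"
    unfolding is_scalar_derivation_def
  proof
    show "is_derivation S" unfolding S_def by (rule der_scale[OF der_Wdeg])
    show "\<forall>a i. \<exists>c. S (Wbasis a i) = Wsmult c (Wbasis a i)"
      by (auto simp: S_def Wdeg_Wbasis)
  qed
  moreover have "D = (\<lambda>v. I v + S v)"
  proof
    fix v
    have "E2 v = 0" by (rule E2z)
    then show "D v = I v + S v"
      by (simp add: E2_def E_def I_def S_def Wbracket_one Wsmult_diff2 algebra_simps)
  qed
  ultimately show ?thesis by blast
qed

end
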